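(* Let $\ell,m,n$ be positive integers with $\ell<n$, $m<n$, $\gcd(m,n)=1$, and let $\mathcal{X},\mathcal{Y},\hat{\mathcal{X}},\hat{\mathcal{Y}},\check{\mathcal{X}},\check{\mathcal{Y}}$ be the words defined in the context from $\mathcal{F}[\ell,m,n]$. Then $$\mathcal{X}\check{\mathcal{X}}=\hat{\mathcal{X}}\mathcal{X}^{\overline0},\qquad \mathcal{Y}\hat{\mathcal{X}}=\check{\mathcal{X}}\mathcal{Y}^{\overline0},\qquad \hat{\mathcal{Y}}\mathcal{X}=\mathcal{X}^{\overline0}\check{\mathcal{Y}},\qquad \check{\mathcal{Y}}\mathcal{Y}=\mathcal{Y}^{\overline0}\hat{\mathcal{Y}}.$$
   Context: For positive integers $\ell<n$, $m<n$, $\gcd(m,n)=1$, $\mathcal{S}=\mathcal{F}[\ell,m,n]$ is the $n$-periodic sequence with $\mathcal{S}_i=L$ if $im\bmod n<\ell$ and $R$ otherwise; indices are taken mod $n$; $d\in\{1,\dots,n-1\}$ is the inverse of $m$ mod $n$. Words are finite strings over $\{L,R\}$ indexed from $0$; juxtaposition is concatenation; $\mathcal{W}^{\overline0}$ is $\mathcal{W}$ with its index-$0$ symbol changed. For an integer $p$ and $q\ge1$, $\mathcal{S}[p;q]=\mathcal{S}_p\cdots\mathcal{S}_{p+q-1}$. Define $\mathcal{X}=\mathcal{S}[0;\ell d\bmod n]$, $\mathcal{Y}=\mathcal{S}_{\ell d\bmod n}\cdots\mathcal{S}_{n-1}$, $\hat{\mathcal{X}}=\mathcal{S}_0\cdots\mathcal{S}_{n-d-1}$,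 $\hat{\mathcal{Y}}=\mathcal{S}_{n-d}\cdots\mathcal{S}_{n-1}$, $\check{\mathcal{X}}=\mathcal{S}[\ell d;n-d]$ (cyclically from index $\ell d\bmod n$ to $((\ell-1)d-1)\bmod n$), $\check{\mathcal{Y}}=\mathcal{S}[(\ell-1)d;d]$ (cyclically from index $(\ell-1)d\bmod n$ to $(\ell d-1)\bmod n$). *)

theory Defs
  imports Main "HOL-Number_Theory.Cong"
begin

datatype sym = L | R

fun flip :: "sym \<Rightarrow> sym" where
  "flip L = R" | "flip R = L"

definition Fseq :: "nat \<Rightarrow> nat \<Rightarrow> nat \<Rightarrow> int \<Rightarrow> sym" where
  "Fseq l m n i = (if (i * int m) mod int n < int l then L else R)"

definition invmod :: "nat \<Rightarrow> nat \<Rightarrow> nat" where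
  "invmod m n = (THE d. d \<in> {1..<n} \<and> [m * d = 1] (mod n))"

definition seg :: "(int \<Rightarrow> sym) \<Rightarrow> int \<Rightarrow> nat \<Rightarrow> sym list" where
  "seg S p q = map (\<lambda>k. S (p + int k)) [0..<q]"

definition bar0 :: "sym list \<Rightarrow> sym list" where
  "bar0 w = w[0 := flip (w ! 0)]"

definition wX :: "nat \<Rightarrow> nat \<Rightarrow> nat \<Rightarrow> sym list" where
  "wX l m n = seg (Fseq l m n) 0 ((l * invmod m n) mod n)"
definition wY :: "nat \<Rightarrow> nat \<Rightarrow> nat \<Rightarrow> sym list" where
  "wY l m n = seg (Fseq l m n) (int ((l * invmod m n) mod n)) (n - (l * invmod m n) mod n)"
definition wXhat :: "nat \<Rightarrow> nat \<Rightarrow> nat \<Rightarrow> sym list" where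
  "wXhat l m n = seg (Fseq l m n) 0 (n - invmod m n)"
definition wYhat :: "nat \<Rightarrow> nat \<Rightarrow> nat \<Rightarrow> sym list" where
  "wYhat l m n = seg (Fseq l m n) (int (n - invmod m n)) (invmod m n)"
definition wXcheck :: "nat \<Rightarrow> nat \<Rightarrow> nat \<Rightarrow> sym list" where
  "wXcheck l m n = seg (Fseq l m n) (int (l * invmod m n)) (n - invmod m n)"
definition wYcheck :: "nat \<Rightarrow> nat \<Rightarrow> nat \<Rightarrow> sym list" where
  "wYcheck l m n = seg (Fseq l m n) ((int l - 1) * int (invmod m n)) (invmod m n)"

end

theory Submission imports Defs begin

lemma invmod_props:
  assumes "0 < m" "m < n" "coprime m n"
  shows "invmod m n \<in> {1..<n} \<and> [m * invmod m n = 1] (mod n)"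
proof -
  obtain x where x: "[m * x = Suc 0] (mod n)" using cong_solve_coprime_nat[OF assms(3)] by blast
  define d where "d = x mod n"
  have n1: "1 < n" using assms by simp
  have dc: "[m * d = 1] (mod n)" unfolding d_def using x
    by (metis One_nat_def cong_def mod_mult_right_eq)
  have dlt: "d < n" unfolding d_def using n1 by simp
  have d0: "d \<noteq> 0" using dc n1 by (cases d) (auto simp: cong_def)
  have P: "d \<in> {1..<n} \<and> [m * d = 1] (mod n)" using dc dlt d0 by auto
  have U: "\<And>e. e \<in> {1..<n} \<and> [m * e = 1] (mod n) \<Longrightarrow> e = d"
  proof -
    fix e assume "e \<in> {1..<n} \<and> [m * e = 1] (mod n)"
    then have "[m * e = m * d] (mod n)" "e < n" using dc by (auto intro: cong_trans cong_sym)
    then have "[e = d] (mod n)" using cong_mult_lcancel_nat[OF assms(3)] by simp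
    then show "e = d" using \<open>e < n\<close> dlt cong_less_modulus_unique_nat by blast
  qed
  have "invmod m n = d" unfolding invmod_def using P U by (rule the_equality)
  then show ?thesis using P by simp
qed

lemma seg_app: "seg S p a @ seg S (p + int a) b = seg S p (a+b)"
  by (rule nth_equalityI) (auto simp: seg_def nth_append add.assoc)

lemma seg_Suc: "seg S p (Suc q) = S p # seg S (p+1) q"
  using seg_app[of S p 1 q] by (simp add: seg_def)

lemma bar0_seg: "bar0 (seg S p (Suc q)) = flip (S p) # seg S (p+1) q"
  by (simp add: seg_Suc bar0_def)

lemma Fseq_per: "[i = j] (mod int n) \<Longrightarrow> Fseq l m n i = Fseq l m n j"
  unfolding Fseq_def cong_def by (metis mod_mult_left_eq)

lemma seg_per: "[p = p'] (mod int n) \<Longrightarrow> seg (Fseq l m n) p q = seg (Fseq l m n) p' q"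
  unfolding seg_def by (auto intro!: Fseq_per cong_add simp: cong_refl)

lemma Fseq_step:
  fixes j :: int
  assumes "0 < l" "l < n" "coprime m n" "[m * d = 1] (mod n)" "[int x = int l * int d] (mod int n)"
    and "\<not> int n dvd j" "\<not> [j = int x] (mod int n)"
  shows "Fseq l m n (j - int d) = Fseq l m n j"
proof -
  define r where "r = (j * int m) mod int n"
  have md: "[int m * int d = 1] (mod int n)" using assms(4) by (metis cong_int_iff of_nat_1 of_nat_mult)
  have c1: "[(j - int d) * int m = j * int m - 1] (mod int n)"
    using md by (metis cong_diff cong_refl left_diff_distrib mult.commute)
  have c2: "[j * int m = r] (mod int n)" unfolding r_def cong_def by simp
  have cop: "coprime (int m) (int n)" using assms(3) by simp
  have r0: "r \<noteq> 0"
  proof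
    assume "r = 0"
    then have "int n dvd j * int m" using r_def by (simp add: dvd_eq_mod_eq_0)
    then have "int n dvd j" using cop by (metis coprime_commute coprime_dvd_mult_left_iff)
    then show False using assms(6) by simp
  qed
  have rl: "r \<noteq> int l"
  proof
    assume "r = int l"
    have "[int x * int m = int l * (int d * int m)] (mod int n)" using assms(5) by (metis cong_scalar_right mult.assoc)
    also have "[int l * (int d * int m) = int l * 1] (mod int n)" using md by (metis cong_scalar_left mult.commute)
    finally have "[j * int m = int x * int m] (mod int n)" using c2 \<open>r = int l\<close> by (metis cong_sym cong_trans mult_1_right)
    then have "[j = int x] (mod int n)" using cong_mult_rcancel[OF cop, of j "int x"] by simp
    then show False using assms(7) by simp
  qed
  have rr: "0 \<le> r" "r < int n" using assms r_def by auto
  have "((j - int d) * int m) mod int n = (r - 1) mod int n"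
    using cong_trans[OF c1 cong_diff[OF c2 cong_refl]] unfolding cong_def .
  also have "\<dots> = r - 1" using rr r0 by simp
  finally show ?thesis unfolding Fseq_def using rl r_def by auto
qed

lemma Fseq_val: "[j * int m = r] (mod int n) \<Longrightarrow> 0 \<le> r \<Longrightarrow> r < int n \<Longrightarrow> Fseq l m n j = (if r < int l then L else R)"
  unfolding Fseq_def cong_def by simp

lemma seg_shift:
  assumes "0 < l" "l < n" "coprime m n" "[m * d = 1] (mod n)" "[int x = int l * int d] (mod int n)"
    and "\<forall>k<q. \<not> int n dvd (p + int k) \<and> \<not> [p + int k = int x] (mod int n)"
  shows "seg (Fseq l m n) (p - int d) q = seg (Fseq l m n) p q"
  unfolding seg_def
proof (rule map_cong[OF refl])
  fix k assume "k \<in> set [0..<q]"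
  then have "k < q" by simp
  then have "Fseq l m n ((p + int k) - int d) = Fseq l m n (p + int k)"
    using assms Fseq_step[OF assms(1-5)] by blast
  then show "Fseq l m n (p - int d + int k) = Fseq l m n (p + int k)" by (simp add: algebra_simps)
qed


context
  fixes l m n d x :: nat
  assumes h: "0 < l" "0 < m" "l < n" "m < n" "coprime m n"
    and dd: "d = invmod m n" and xd: "x = (l * d) mod n"
begin

abbreviation S where "S \<equiv> Fseq l m n"

lemma c_dP: "d \<in> {1..<n}" "[m * d = 1] (mod n)"
  using invmod_props[OF h(2,4,5)] dd by auto

lemma c_dn: "1 \<le> d" "d < n" using c_dP by auto

lemma c_xc: "[int x = int l * int d] (mod int n)" unfolding xd cong_def by (simp add: zmod_int)

lemma c_xn: "x < n" using xd h by simp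

lemma c_x0: "0 < x"
proof (rule ccontr)
  have cdn: "coprime d n"
    using c_dP(2) by (metis cong_imp_coprime cong_sym coprime_1_left coprime_mult_left_iff)
  assume "\<not> 0 < x"
  then have "n dvd l * d" using xd by (simp add: dvd_eq_mod_eq_0)
  then have "n dvd l" using cdn by (metis coprime_commute coprime_dvd_mult_left_iff)
  then show False using h(1,3) by (simp add: nat_dvd_not_less)
qed

lemma c_md: "[int m * int d = 1] (mod int n)" using c_dP(2) by (metis cong_int_iff of_nat_1 of_nat_mult)

lemma c_S0: "S 0 = L" unfolding Fseq_def using h by simp

lemma c_Smd: "S (- int d) = R"
proof -
  have "[- int d * int m = - 1] (mod int n)" using c_md by (metis cong_minus_minus_iff minus_mult_left mult.commute)
  moreover have "[- 1 = int n - 1] (mod int n)" unfolding cong_def using mod_add_self2[of "-1::int" "int n"] by simp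
  ultimately have "[- int d * int m = int n - 1] (mod int n)" by (rule cong_trans)
  then show ?thesis using Fseq_val[of "- int d" m "int n - 1" n l] h by simp
qed

lemma c_xm: "[int x * int m = int l] (mod int n)"
proof -
  have "[int x * int m = int l * (int d * int m)] (mod int n)" using c_xc by (metis cong_scalar_right mult.assoc)
  also have "[int l * (int d * int m) = int l * 1] (mod int n)" using c_md by (metis cong_scalar_left mult.commute)
  finally show ?thesis by simp
qed

lemma c_Sx: "S (int x) = R"
  using c_xm Fseq_val[of "int x" m "int l" n l] h by simp

lemma c_Sxd: "S (int x - int d) = L"
proof -
  have "[int x * int m - int d * int m = int l - 1] (mod int n)" using cong_diff[OF c_xm] c_md by (simp add: mult.commute)
  then have "[(int x - int d) * int m = int l - 1] (mod int n)" by (simp add: algebra_simps)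
  then show ?thesis using Fseq_val[of "int x - int d" m "int l - 1" n l] h by simp
qed

lemmas hyp = h(1) h(3) h(5) c_dP(2) c_xc

lemma c_A: "seg S (- int d) x = bar0 (seg S 0 x)"
proof -
  obtain q where q: "x = Suc q" using c_x0 by (cases x) auto
  have "seg S (1 - int d) q = seg S 1 q"
  proof (rule seg_shift[OF hyp], intro allI impI conjI)
    fix k assume k: "k < q"
    then have k1: "0 < 1 + int k" "1 + int k < int n" "1 + int k < int x" using q c_xn by auto
    show "\<not> int n dvd (1 + int k)" using k1 zdvd_imp_le by fastforce
    show "\<not> [1 + int k = int x] (mod int n)"
      using k1 c_xn cong_less_imp_eq_int[of "1 + int k" "int n" "int x"] by auto
  qed
  then show ?thesis using q c_Smd c_S0 by (simp add: seg_Suc bar0_def)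
qed

lemma c_B: "seg S (int x - int d) (n - x) = bar0 (seg S (int x) (n - x))"
proof -
  obtain q where q: "n - x = Suc q" using c_xn by (cases "n - x") auto
  have "seg S (int x + 1 - int d) q = seg S (int x + 1) q"
  proof (rule seg_shift[OF hyp], intro allI impI conjI)
    fix k assume k: "k < q"
    then have k1: "0 < int x + 1 + int k" "int x + 1 + int k < int n" "int x < int x + 1 + int k" using q c_xn by auto
    show "\<not> int n dvd (int x + 1 + int k)" using k1 zdvd_imp_le by fastforce
    show "\<not> [int x + 1 + int k = int x] (mod int n)"
      using k1 c_xn cong_less_imp_eq_int[of "int x + 1 + int k" "int n" "int x"] by auto
  qed
  then show ?thesis using q c_Sxd c_Sx by (simp add: seg_Suc bar0_def algebra_simps)
qed

lemma per: "[p = p'] (mod int n) \<Longrightarrow> seg S p q = seg S p' q" by (rule seg_per)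

lemma c_id1: "seg S 0 x @ seg S (int x) (n - d) = seg S 0 (n - d) @ bar0 (seg S 0 x)"
proof -
  have "seg S 0 x @ seg S (int x) (n - d) = seg S 0 ((n - d) + x)" using seg_app[of S 0 x "n-d"] by (simp add: add.commute)
  also have "\<dots> = seg S 0 (n - d) @ seg S (int (n - d)) x" using seg_app[of S 0 "n-d" x] by simp
  also have "seg S (int (n - d)) x = seg S (- int d) x" using c_dn by (intro per) (simp add: cong_def of_nat_diff)
  finally show ?thesis using c_A by simp
qed

lemma c_id2: "seg S (int x) (n - x) @ seg S 0 (n - d) = seg S (int x) (n - d) @ bar0 (seg S (int x) (n - x))"
proof -
  have "seg S 0 (n - d) = seg S (int x + int (n - x)) (n - d)" using c_xn by (intro per) (simp add: cong_def of_nat_diff)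
  then have "seg S (int x) (n - x) @ seg S 0 (n - d) = seg S (int x) ((n - d) + (n - x))"
    using seg_app[of S "int x" "n - x" "n - d"] by (simp add: add.commute)
  also have "\<dots> = seg S (int x) (n - d) @ seg S (int x + int (n - d)) (n - x)" using seg_app[of S "int x" "n-d" "n - x"] by simp
  also have "seg S (int x + int (n - d)) (n - x) = seg S (int x - int d) (n - x)" using c_dn by (intro per) (simp add: cong_iff_dvd_diff of_nat_diff)
  finally show ?thesis using c_B by simp
qed

lemma c_id3: "seg S (int n - int d) d @ seg S 0 x = bar0 (seg S 0 x) @ seg S (int x - int d) d"
proof -
  have "seg S 0 x = seg S (int n - int d + int d) x" by (intro per) (simp add: cong_def)
  then have "seg S (int n - int d) d @ seg S 0 x = seg S (int n - int d) (x + d)"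
    using seg_app[of S "int n - int d" d x] by (simp add: add.commute)
  also have "\<dots> = seg S (int n - int d) x @ seg S (int n - int d + int x) d" using seg_app[of S "int n - int d" x d] by simp
  also have "seg S (int n - int d) x = seg S (- int d) x" by (intro per) (simp add: cong_def)
  also have "seg S (int n - int d + int x) d = seg S (int x - int d) d" by (intro per) (simp add: cong_iff_dvd_diff)
  finally show ?thesis using c_A by simp
qed

lemma c_id4: "seg S (int x - int d) d @ seg S (int x) (n - x) = bar0 (seg S (int x) (n - x)) @ seg S (int n - int d) d"
proof -
  have "seg S (int x - int d) d @ seg S (int x) (n - x) = seg S (int x - int d) ((n - x) + d)"
    using seg_app[of S "int x - int d" d "n - x"] by (simp add: add.commute)
  also have "\<dots> = seg S (int x - int d) (n - x) @ seg S (int x - int d + int (n - x)) d"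
    using seg_app[of S "int x - int d" "n - x" d] by simp
  also have "int x - int d + int (n - x) = int n - int d" using c_xn by (simp add: of_nat_diff)
  finally show ?thesis using c_B by simp
qed

lemma c_eX: "wX l m n = seg S 0 x" unfolding wX_def xd dd ..
lemma c_eY: "wY l m n = seg S (int x) (n - x)" unfolding wY_def xd dd ..
lemma c_eXh: "wXhat l m n = seg S 0 (n - d)" unfolding wXhat_def dd ..
lemma c_eYh: "wYhat l m n = seg S (int n - int d) d" unfolding wYhat_def dd[symmetric] using c_dn by (simp add: of_nat_diff)
lemma c_eXc: "wXcheck l m n = seg S (int x) (n - d)" unfolding wXcheck_def dd[symmetric]
  by (rule seg_per) (use c_xc in \<open>simp add: cong_sym\<close>)
lemma c_eYc: "wYcheck l m n = seg S (int x - int d) d" unfolding wYcheck_def dd[symmetric]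
  by (rule seg_per) (use c_xc in \<open>auto simp: cong_sym algebra_simps intro: cong_diff\<close>)

lemma c_main: "wX l m n @ wXcheck l m n = wXhat l m n @ bar0 (wX l m n) \<and>
    wY l m n @ wXhat l m n = wXcheck l m n @ bar0 (wY l m n) \<and>
    wYhat l m n @ wX l m n = bar0 (wX l m n) @ wYcheck l m n \<and>
    wYcheck l m n @ wY l m n = bar0 (wY l m n) @ wYhat l m n"
  unfolding c_eX c_eY c_eXh c_eYh c_eXc c_eYc using c_id1 c_id2 c_id3 c_id4 by simp

end

theorem proposition3p4:
  fixes l m n :: nat
  assumes "0 < l" "0 < m" "l < n" "m < n" "coprime m n"
  shows "wX l m n @ wXcheck l m n = wXhat l m n @ bar0 (wX l m n) \<and>
    wY l m n @ wXhat l m n = wXcheck l m n @ bar0 (wY l m n) \<and>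
    wYhat l m n @ wX l m n = bar0 (wX l m n) @ wYcheck l m n \<and>
    wYcheck l m n @ wY l m n = bar0 (wY l m n) @ wYhat l m n"
  using c_main[OF assms refl refl] .

end
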